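(* Let $(\mathbf{x}^1,y_l^1,y_r^1),\dots,(\mathbf{x}^T,y_l^T,y_r^T)$ be a sequence of examples with $\mathbf{x}^t\in\mathbb{R}^d$ and integers $1\le y_l^t\le y_r^t\le K$, and run the PA algorithm on it starting from $\mathbf{w}^1=\mathbf{0}$, $\boldsymbol\theta^1=\mathbf{0}$. Let $c=\min_{t\in[T]}(y_r^t-y_l^t)$, $R^2=\max_{t\in[T]}\Vert\mathbf{x}^t\Vert^2$, $D=1+R^2(K-c-1)$, and let $\mathbf{v}=(\mathbf{u},\mathbf{b})$ with $\mathbf{u}\in\mathbb{R}^d$, $\mathbf{b}\in\mathbb{R}^{K-1}$ be the parameters of an arbitrary predictor, $\Vert\mathbf{v}\Vert^2=\Vert\mathbf{u}\Vert^2+\Vert\mathbf{b}\Vert^2$. Then $$\sum_{t=1}^T\sum_{i=1}^{K-1}(l_i^t)^2\le D^2\left(\Vert\mathbf{v}\Vert+4(K-c-1)\sqrt{\sum_{t=1}^T\sum_{i=1}^{K-1}(l_i^{t*})^2}\right)^2 .$$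
   Context: PA algorithm: at trial $t$, with current $(\mathbf{w}^t,\boldsymbol\theta^t)\in\mathbb{R}^d\times\mathbb{R}^{K-1}$, the new parameters $(\mathbf{w}^{t+1},\boldsymbol\theta^{t+1})$ are the unique minimizer of $\tfrac12\Vert\mathbf{w}-\mathbf{w}^t\Vert^2+\tfrac12\Vert\boldsymbol\theta-\boldsymbol\theta^t\Vert^2$ subject to $\mathbf{w}\cdot\mathbf{x}^t-\theta_i\ge1$ for $i=1,\dots,y_l^t-1$ and $\mathbf{w}\cdot\mathbf{x}^t-\theta_i\le-1$ for $i=y_r^t,\dots,K-1$. Losses of the algorithm at trial $t$: $l_i^t=\max(0,1+\theta_i^t-\mathbf{w}^t\cdot\mathbf{x}^t)$ for $1\le i\le y_l^t-1$, $l_i^t=\max(0,1+\mathbf{w}^t\cdot\mathbf{x}^t-\theta_i^t)$ for $y_r^t\le i\le K-1$, and $l_i^t=0$ for $y_l^t\le i\le y_r^t-1$. Losses of the fixed predictor $(\mathbf{u},\mathbf{b})$: $l_i^{t*}=\max(0,1-\mathbf{u}\cdot\mathbf{x}^t+b_i)$ for $1\le i\le y_l^t-1$, $l_i^{t*}=\max(0,1+\mathbf{u}\cdot\mathbf{x}^t-b_i)$ for $y_r^t\le i\le K-1$, and $0$ otherwise. *)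

theory Defs
  imports "HOL-Analysis.Analysis"
begin

text \<open>Weight vectors live in an
arbitrary Euclidean space 'a (= R^d); threshold vectors in R^(K-1) are
represented as functions nat => real whose relevant coordinates are 1..K-1.\<close>

definition pa_feasible ::
  "nat \<Rightarrow> 'a::euclidean_space \<Rightarrow> nat \<Rightarrow> nat \<Rightarrow> 'a \<Rightarrow> (nat \<Rightarrow> real) \<Rightarrow> bool" where
  "pa_feasible K x yl yr w \<theta> \<longleftrightarrow>
     (\<forall>i\<in>{1..<yl}. w \<bullet> x - \<theta> i \<ge> 1) \<and> (\<forall>i\<in>{yr..K-1}. w \<bullet> x - \<theta> i \<le> -1)"

definition pa_objective ::
  "nat \<Rightarrow> 'a::euclidean_space \<Rightarrow> (nat \<Rightarrow> real) \<Rightarrow> 'a \<Rightarrow> (nat \<Rightarrow> real) \<Rightarrow> real" where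
  "pa_objective K w0 \<theta>0 w \<theta> =
     (1/2) * (norm (w - w0))\<^sup>2 + (1/2) * (\<Sum>i=1..K-1. (\<theta> i - \<theta>0 i)\<^sup>2)"

definition is_PA_update ::
  "nat \<Rightarrow> 'a::euclidean_space \<Rightarrow> nat \<Rightarrow> nat \<Rightarrow> 'a \<Rightarrow> (nat \<Rightarrow> real)
     \<Rightarrow> 'a \<Rightarrow> (nat \<Rightarrow> real) \<Rightarrow> bool" where
  "is_PA_update K x yl yr w \<theta> w' \<theta>' \<longleftrightarrow>
     (\<forall>i. i \<notin> {1..K-1} \<longrightarrow> \<theta>' i = 0) \<and>
     pa_feasible K x yl yr w' \<theta>' \<and>
     (\<forall>w2 \<theta>2. pa_feasible K x yl yr w2 \<theta>2 \<longrightarrow>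
        pa_objective K w \<theta> w' \<theta>' \<le> pa_objective K w \<theta> w2 \<theta>2)"

definition ord_loss ::
  "nat \<Rightarrow> 'a::euclidean_space \<Rightarrow> nat \<Rightarrow> nat \<Rightarrow> 'a \<Rightarrow> (nat \<Rightarrow> real) \<Rightarrow> nat \<Rightarrow> real" where
  "ord_loss K x yl yr w \<theta> i =
     (if 1 \<le> i \<and> i \<le> yl - 1 then max 0 (1 + \<theta> i - w \<bullet> x)
      else if yr \<le> i \<and> i \<le> K - 1 then max 0 (1 + w \<bullet> x - \<theta> i)
      else 0)"

end

theory Submission
  imports Defs
begin

lemma cs_sum:
  fixes f g :: "'b \<Rightarrow> real"
  shows "(\<Sum>i\<in>A. f i * g i) \<le> sqrt (\<Sum>i\<in>A. (f i)\<^sup>2) * sqrt (\<Sum>i\<in>A. (g i)\<^sup>2)"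
proof -
  have "(\<Sum>i\<in>A. f i * g i) \<le> (\<Sum>i\<in>A. \<bar>f i\<bar> * \<bar>g i\<bar>)"
    by (rule sum_mono) (metis abs_ge_self abs_mult)
  also have "\<dots> \<le> L2_set f A * L2_set g A" by (rule L2_set_mult_ineq)
  finally show ?thesis unfolding L2_set_def .
qed

lemma norm_expand:
  fixes a p :: "'a::real_inner"
  shows "(norm (a + l *\<^sub>R p))\<^sup>2 = (norm a)\<^sup>2 + 2 * l * (a \<bullet> p) + l\<^sup>2 * (norm p)\<^sup>2"
proof -
  have "(norm (a + l *\<^sub>R p))\<^sup>2 = (a + l *\<^sub>R p) \<bullet> (a + l *\<^sub>R p)" by (simp add: dot_square_norm)
  also have "\<dots> = a \<bullet> a + 2 * l * (a \<bullet> p) + l\<^sup>2 * (p \<bullet> p)"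
    by (simp add: inner_add_left inner_add_right inner_commute power2_eq_square algebra_simps)
  finally show ?thesis by (simp add: dot_square_norm)
qed

lemma var_ineq:
  fixes x w w' u :: "'a::euclidean_space" and \<theta> \<theta>' b' :: "nat \<Rightarrow> real"
  assumes upd: "is_PA_update K x yl yr w \<theta> w' \<theta>'"
    and feas: "pa_feasible K x yl yr u b'"
  shows "(w' - w) \<bullet> (u - w') + (\<Sum>i=1..K-1. (\<theta>' i - \<theta> i) * (b' i - \<theta>' i)) \<ge> 0"
proof (rule ccontr)
  define G where "G = (w' - w) \<bullet> (u - w') + (\<Sum>i=1..K-1. (\<theta>' i - \<theta> i) * (b' i - \<theta>' i))"
  define H where "H = (norm (u - w'))\<^sup>2 + (\<Sum>i=1..K-1. (b' i - \<theta>' i)\<^sup>2)"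
  assume "\<not> ?thesis"
  hence G: "G < 0" unfolding G_def by simp
  have H: "H \<ge> 0" unfolding H_def by (simp add: sum_nonneg)
  define l where "l = - G / (H - G)"
  have l0: "0 < l" "l \<le> 1" using G H unfolding l_def by (auto simp: field_simps)
  have lH: "l * H \<le> - G" using G H unfolding l_def by (auto simp: field_simps)
  define w2 where "w2 = w' + l *\<^sub>R (u - w')"
  define t2 where "t2 = (\<lambda>i. \<theta>' i + l * (b' i - \<theta>' i))"
  have comb: "w2 \<bullet> x - t2 i = (1 - l) * (w' \<bullet> x - \<theta>' i) + l * (u \<bullet> x - b' i)" for i
    unfolding w2_def t2_def by (simp add: inner_add_left inner_diff_left algebra_simps)
  have f1: "pa_feasible K x yl yr w' \<theta>'" using upd unfolding is_PA_update_def by blast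
  have "pa_feasible K x yl yr w2 t2"
    unfolding pa_feasible_def
  proof (intro conjI ballI)
    fix i assume i: "i \<in> {1..<yl}"
    have a: "w' \<bullet> x - \<theta>' i \<ge> 1" using f1 i unfolding pa_feasible_def by blast
    have b: "u \<bullet> x - b' i \<ge> 1" using feas i unfolding pa_feasible_def by blast
    have "(1 - l) * 1 \<le> (1 - l) * (w' \<bullet> x - \<theta>' i)" using a l0 by (intro mult_left_mono) auto
    moreover have "l * 1 \<le> l * (u \<bullet> x - b' i)" using b l0 by (intro mult_left_mono) auto
    ultimately have "1 - l \<le> (1 - l) * (w' \<bullet> x - \<theta>' i)" "l \<le> l * (u \<bullet> x - b' i)" by simp_all
    thus "1 \<le> w2 \<bullet> x - t2 i" unfolding comb by linarith
  next
    fix i assume i: "i \<in> {yr..K-1}"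
    have a: "w' \<bullet> x - \<theta>' i \<le> -1" using f1 i unfolding pa_feasible_def by blast
    have b: "u \<bullet> x - b' i \<le> -1" using feas i unfolding pa_feasible_def by blast
    have "(1 - l) * (w' \<bullet> x - \<theta>' i) \<le> (1 - l) * (-1)" using a l0 by (intro mult_left_mono) auto
    moreover have "l * (u \<bullet> x - b' i) \<le> l * (-1)" using b l0 by (intro mult_left_mono) auto
    ultimately have "(1 - l) * (w' \<bullet> x - \<theta>' i) \<le> l - 1" "l * (u \<bullet> x - b' i) \<le> - l" by simp_all
    thus "w2 \<bullet> x - t2 i \<le> -1" unfolding comb by linarith
  qed
  hence le: "pa_objective K w \<theta> w' \<theta>' \<le> pa_objective K w \<theta> w2 t2"
    using upd unfolding is_PA_update_def by blast
  have e1: "(norm (w2 - w))\<^sup>2 = (norm (w' - w))\<^sup>2 + 2 * l * ((w' - w) \<bullet> (u - w')) + l\<^sup>2 * (norm (u - w'))\<^sup>2"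
  proof -
    have eq: "w2 - w = (w' - w) + l *\<^sub>R (u - w')" unfolding w2_def by simp
    show ?thesis unfolding eq by (rule norm_expand)
  qed
  have e2: "(\<Sum>i=1..K-1. (t2 i - \<theta> i)\<^sup>2) = (\<Sum>i=1..K-1. (\<theta>' i - \<theta> i)\<^sup>2)
      + 2 * l * (\<Sum>i=1..K-1. (\<theta>' i - \<theta> i) * (b' i - \<theta>' i)) + l\<^sup>2 * (\<Sum>i=1..K-1. (b' i - \<theta>' i)\<^sup>2)"
  proof -
    have "(\<Sum>i=1..K-1. (t2 i - \<theta> i)\<^sup>2) = (\<Sum>i=1..K-1. (\<theta>' i - \<theta> i)\<^sup>2
      + 2 * l * ((\<theta>' i - \<theta> i) * (b' i - \<theta>' i)) + l\<^sup>2 * (b' i - \<theta>' i)\<^sup>2)"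
      by (rule sum.cong) (simp_all add: t2_def power2_eq_square algebra_simps)
    also have "\<dots> = (\<Sum>i=1..K-1. (\<theta>' i - \<theta> i)\<^sup>2)
      + 2 * l * (\<Sum>i=1..K-1. (\<theta>' i - \<theta> i) * (b' i - \<theta>' i)) + l\<^sup>2 * (\<Sum>i=1..K-1. (b' i - \<theta>' i)\<^sup>2)"
      by (simp add: sum.distrib sum_distrib_left)
    finally show ?thesis .
  qed
  have "pa_objective K w \<theta> w2 t2 = pa_objective K w \<theta> w' \<theta>' + l * G + l\<^sup>2 / 2 * H"
    unfolding pa_objective_def e1 e2 G_def H_def by (simp add: algebra_simps)
  with le have "0 \<le> l * G + l\<^sup>2 / 2 * H" by simp
  hence "0 \<le> l * (G + l * H / 2)" by (simp add: algebra_simps power2_eq_square)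
  hence "0 \<le> G + l * H / 2" using l0 by (simp add: zero_le_mult_iff)
  with lH G show False by linarith
qed

lemma lin_aux:
  fixes t1 t2 t3 t4 t5 t6 t7 ds :: real
  shows "0 \<le> t5 + t7 \<Longrightarrow> t1 \<le> ds \<Longrightarrow>
    t2 + t3 - 2 * ds \<le> t4 - 2 * - t5 + t2 + (t6 - 2 * (- t7 + t1) + t3) - (t4 + t6)"
  by (simp add: algebra_simps)

lemma step_bound:
  fixes x w w' u :: "'a::euclidean_space" and \<theta> \<theta>' b :: "nat \<Rightarrow> real"
  assumes upd: "is_PA_update K x yl yr w \<theta> w' \<theta>'"
    and lab: "1 \<le> yl" "yl \<le> yr" "yr \<le> K"
  shows "(sqrt ((norm (w' - w))\<^sup>2 + (\<Sum>i=1..K-1. (\<theta>' i - \<theta> i)\<^sup>2)))\<^sup>2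
      - 2 * sqrt ((norm (w' - w))\<^sup>2 + (\<Sum>i=1..K-1. (\<theta>' i - \<theta> i)\<^sup>2))
          * sqrt (\<Sum>i=1..K-1. (ord_loss K x yl yr u b i)\<^sup>2)
    \<le> ((norm (w - u))\<^sup>2 + (\<Sum>i=1..K-1. (\<theta> i - b i)\<^sup>2))
      - ((norm (w' - u))\<^sup>2 + (\<Sum>i=1..K-1. (\<theta>' i - b i)\<^sup>2))"
proof -
  define ls where "ls i = ord_loss K x yl yr u b i" for i
  define b' where "b' i = (if 1 \<le> i \<and> i \<le> yl - 1 then b i - ls i else b i + ls i)" for i
  define d where "d = sqrt ((norm (w' - w))\<^sup>2 + (\<Sum>i=1..K-1. (\<theta>' i - \<theta> i)\<^sup>2))"
  define s where "s = sqrt (\<Sum>i=1..K-1. (ls i)\<^sup>2)"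
  have d2: "d\<^sup>2 = (norm (w' - w))\<^sup>2 + (\<Sum>i=1..K-1. (\<theta>' i - \<theta> i)\<^sup>2)"
    unfolding d_def by (simp add: sum_nonneg)
  have feas: "pa_feasible K x yl yr u b'"
    unfolding pa_feasible_def
  proof (intro conjI ballI)
    fix i assume i: "i \<in> {1..<yl}"
    hence "ls i = max 0 (1 + b i - u \<bullet> x)" "b' i = b i - ls i"
      unfolding ls_def ord_loss_def b'_def by auto
    thus "1 \<le> u \<bullet> x - b' i" by linarith
  next
    fix i assume i: "i \<in> {yr..K-1}"
    hence "ls i = max 0 (1 + u \<bullet> x - b i)" "b' i = b i + ls i"
      using lab unfolding ls_def ord_loss_def b'_def by auto
    thus "u \<bullet> x - b' i \<le> -1" by linarith
  qed
  have G: "(w' - w) \<bullet> (u - w') + (\<Sum>i=1..K-1. (\<theta>' i - \<theta> i) * (b' i - \<theta>' i)) \<ge> 0"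
    by (rule var_ineq[OF upd feas])
  have bb: "(b' i - b i)\<^sup>2 = (ls i)\<^sup>2" for i unfolding b'_def by (auto simp: power2_eq_square)
  have cs: "(\<Sum>i=1..K-1. (\<theta>' i - \<theta> i) * (b' i - b i)) \<le> d * s"
  proof -
    have "(\<Sum>i=1..K-1. (\<theta>' i - \<theta> i) * (b' i - b i))
        \<le> sqrt (\<Sum>i=1..K-1. (\<theta>' i - \<theta> i)\<^sup>2) * sqrt (\<Sum>i=1..K-1. (b' i - b i)\<^sup>2)"
      by (rule cs_sum)
    also have "\<dots> = sqrt (\<Sum>i=1..K-1. (\<theta>' i - \<theta> i)\<^sup>2) * s" unfolding s_def bb ..
    also have "\<dots> \<le> d * s" unfolding d_def s_def
      by (intro mult_right_mono real_sqrt_le_mono) (auto simp: sum_nonneg)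
    finally show ?thesis .
  qed
  have e1: "(norm (w - u))\<^sup>2 = (norm (w' - u))\<^sup>2 - 2 * ((w' - w) \<bullet> (w' - u)) + (norm (w' - w))\<^sup>2"
  proof -
    have eq: "w - u = (w' - u) + (-1) *\<^sub>R (w' - w)" by (simp add: algebra_simps)
    show ?thesis unfolding eq norm_expand by (simp add: inner_commute)
  qed
  have e2: "(\<Sum>i=1..K-1. (\<theta> i - b i)\<^sup>2) = (\<Sum>i=1..K-1. (\<theta>' i - b i)\<^sup>2)
     - 2 * (\<Sum>i=1..K-1. (\<theta>' i - \<theta> i) * (\<theta>' i - b i)) + (\<Sum>i=1..K-1. (\<theta>' i - \<theta> i)\<^sup>2)"
  proof -
    have "(\<Sum>i=1..K-1. (\<theta> i - b i)\<^sup>2) = (\<Sum>i=1..K-1. (\<theta>' i - b i)\<^sup>2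
     - 2 * ((\<theta>' i - \<theta> i) * (\<theta>' i - b i)) + (\<theta>' i - \<theta> i)\<^sup>2)"
      by (rule sum.cong) (simp_all add: power2_eq_square algebra_simps)
    also have "\<dots> = (\<Sum>i=1..K-1. (\<theta>' i - b i)\<^sup>2)
     - 2 * (\<Sum>i=1..K-1. (\<theta>' i - \<theta> i) * (\<theta>' i - b i)) + (\<Sum>i=1..K-1. (\<theta>' i - \<theta> i)\<^sup>2)"
      by (simp add: sum.distrib sum_subtractf sum_distrib_left)
    finally show ?thesis .
  qed
  have sp: "(\<Sum>i=1..K-1. (\<theta>' i - \<theta> i) * (\<theta>' i - b i)) =
      - (\<Sum>i=1..K-1. (\<theta>' i - \<theta> i) * (b' i - \<theta>' i)) + (\<Sum>i=1..K-1. (\<theta>' i - \<theta> i) * (b' i - b i))"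
  proof -
    have "(\<Sum>i=1..K-1. (\<theta>' i - \<theta> i) * (\<theta>' i - b i)) =
      (\<Sum>i=1..K-1. - ((\<theta>' i - \<theta> i) * (b' i - \<theta>' i)) + (\<theta>' i - \<theta> i) * (b' i - b i))"
      by (rule sum.cong) (simp_all add: algebra_simps)
    thus ?thesis by (simp add: sum.distrib sum_negf sum_subtractf)
  qed
  have ip: "(w' - w) \<bullet> (w' - u) = - ((w' - w) \<bullet> (u - w'))"
    by (metis inner_minus_right minus_diff_eq)
  have "d\<^sup>2 - 2 * (d * s) \<le> ((norm (w - u))\<^sup>2 + (\<Sum>i=1..K-1. (\<theta> i - b i)\<^sup>2))
      - ((norm (w' - u))\<^sup>2 + (\<Sum>i=1..K-1. (\<theta>' i - b i)\<^sup>2))"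
    unfolding e1 e2 d2 sp ip using G cs by (rule lin_aux)
  thus ?thesis unfolding d_def s_def ls_def by (simp add: mult.assoc)
qed

lemma sq_aux:
  fixes a R p N R2 l :: real
  assumes "a \<ge> 0" "R \<ge> 0" "p \<ge> 0" "N \<ge> 1" "R\<^sup>2 \<le> R2" "0 \<le> l" "l \<le> a + R * p"
  shows "l\<^sup>2 \<le> (1 + R2 * N) * a\<^sup>2 + (R2 + 1 / N) * p\<^sup>2"
proof -
  have "l\<^sup>2 \<le> (a + R * p)\<^sup>2" using assms by (intro power_mono) auto
  also have "\<dots> = a\<^sup>2 + 2 * (a * R * p) + R\<^sup>2 * p\<^sup>2" by (simp add: power2_eq_square algebra_simps)
  also have "2 * (a * R * p) \<le> N * R\<^sup>2 * a\<^sup>2 + p\<^sup>2 / N"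
  proof -
    have "0 \<le> (N * R * a - p)\<^sup>2" by simp
    hence "N * (2 * (a * R * p)) \<le> N * (N * R\<^sup>2 * a\<^sup>2 + p\<^sup>2 / N)" using assms
      by (simp add: power2_eq_square algebra_simps)
    thus ?thesis using assms by simp
  qed
  hence "a\<^sup>2 + 2 * (a * R * p) + R\<^sup>2 * p\<^sup>2 \<le> a\<^sup>2 + N * R\<^sup>2 * a\<^sup>2 + p\<^sup>2 / N + R\<^sup>2 * p\<^sup>2" by simp
  also have "\<dots> \<le> a\<^sup>2 + N * R2 * a\<^sup>2 + p\<^sup>2 / N + R2 * p\<^sup>2"
    using assms by (intro add_mono mult_right_mono mult_left_mono order_refl) auto
  also have "\<dots> = (1 + R2 * N) * a\<^sup>2 + (R2 + 1 / N) * p\<^sup>2" by (simp add: algebra_simps)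
  finally show ?thesis .
qed

lemma loss_bound:
  fixes x w w' :: "'a::euclidean_space" and \<theta> \<theta>' :: "nat \<Rightarrow> real"
  assumes upd: "is_PA_update K x yl yr w \<theta> w' \<theta>'"
    and lab: "1 \<le> yl" "yl \<le> yr" "yr \<le> K"
    and N: "real K - 1 - real (yr - yl) \<le> N" "1 \<le> N"
    and R: "(norm x)\<^sup>2 \<le> R2"
  shows "(\<Sum>i=1..K-1. (ord_loss K x yl yr w \<theta> i)\<^sup>2)
    \<le> (1 + R2 * N) * ((norm (w' - w))\<^sup>2 + (\<Sum>i=1..K-1. (\<theta>' i - \<theta> i)\<^sup>2))"
proof -
  define S where "S = {1..yl-1} \<union> {yr..K-1}"
  define A where "A = {1..K-1}"
  define p where "p = norm (w' - w)"
  define l where "l i = ord_loss K x yl yr w \<theta> i" for i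
  have SA: "S \<subseteq> A" using lab unfolding S_def A_def by auto
  have z: "l i = 0" if "i \<in> A - S" for i using that unfolding l_def ord_loss_def A_def S_def by auto
  have "(\<Sum>i\<in>A. (l i)\<^sup>2) = (\<Sum>i\<in>S. (l i)\<^sup>2)"
    by (rule sum.mono_neutral_right) (use SA z in \<open>auto simp: A_def\<close>)
  have f1: "pa_feasible K x yl yr w' \<theta>'" using upd unfolding is_PA_update_def by blast
  have cs: "\<bar>(w' - w) \<bullet> x\<bar> \<le> p * norm x" unfolding p_def by (rule Cauchy_Schwarz_ineq2)
  have li: "(l i)\<^sup>2 \<le> (1 + R2 * N) * (\<theta>' i - \<theta> i)\<^sup>2 + (R2 + 1 / N) * p\<^sup>2" if i: "i \<in> S" for i
  proof -
    have "l i \<le> \<bar>\<theta>' i - \<theta> i\<bar> + norm x * p \<and> 0 \<le> l i"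
    proof (cases "1 \<le> i \<and> i \<le> yl - 1")
      case True
      hence "i \<in> {1..<yl}" using lab by auto
      hence "w' \<bullet> x - \<theta>' i \<ge> 1" using f1 unfolding pa_feasible_def by blast
      moreover have "l i = max 0 (1 + \<theta> i - w \<bullet> x)" using True unfolding l_def ord_loss_def by simp
      moreover have "(w' - w) \<bullet> x = w' \<bullet> x - w \<bullet> x" by (simp add: inner_diff_left)
      ultimately show ?thesis using cs by (auto simp: mult.commute)
    next
      case False
      hence i2: "yr \<le> i \<and> i \<le> K - 1" using i unfolding S_def by auto
      hence "i \<in> {yr..K-1}" by auto
      hence "w' \<bullet> x - \<theta>' i \<le> -1" using f1 unfolding pa_feasible_def by blast
      moreover have "l i = max 0 (1 + w \<bullet> x - \<theta> i)" using False i2 unfolding l_def ord_loss_def by auto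
      moreover have "(w' - w) \<bullet> x = w' \<bullet> x - w \<bullet> x" by (simp add: inner_diff_left)
      ultimately show ?thesis using cs by (auto simp: mult.commute)
    qed
    hence "(l i)\<^sup>2 \<le> (1 + R2 * N) * \<bar>\<theta>' i - \<theta> i\<bar>\<^sup>2 + (R2 + 1 / N) * p\<^sup>2"
      using N R by (intro sq_aux[where R = "norm x"]) (auto simp: p_def)
    thus ?thesis by simp
  qed
  have cardS: "real (card S) \<le> N"
  proof -
    have "card S = card {1..yl-1} + card {yr..K-1}" unfolding S_def
      using lab by (intro card_Un_disjoint) auto
    also have "\<dots> = (yl - 1) + (K - yr)" using lab by simp
    finally have "real (card S) = real K - 1 - real (yr - yl)" using lab by (simp add: of_nat_diff)
    thus ?thesis using N by linarith
  qed
  have R2: "R2 \<ge> 0" using R by (meson order_trans zero_le_power2)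
  have "(\<Sum>i\<in>S. (l i)\<^sup>2) \<le> (\<Sum>i\<in>S. (1 + R2 * N) * (\<theta>' i - \<theta> i)\<^sup>2 + (R2 + 1 / N) * p\<^sup>2)"
    by (rule sum_mono) (rule li)
  also have "\<dots> = (1 + R2 * N) * (\<Sum>i\<in>S. (\<theta>' i - \<theta> i)\<^sup>2) + real (card S) * ((R2 + 1 / N) * p\<^sup>2)"
    by (simp add: sum.distrib sum_distrib_left)
  also have "\<dots> \<le> (1 + R2 * N) * (\<Sum>i\<in>A. (\<theta>' i - \<theta> i)\<^sup>2) + N * ((R2 + 1 / N) * p\<^sup>2)"
    using R2 N cardS SA
    by (intro add_mono mult_left_mono mult_right_mono sum_mono2) (auto simp: A_def)
  also have "\<dots> = (1 + R2 * N) * (p\<^sup>2 + (\<Sum>i\<in>A. (\<theta>' i - \<theta> i)\<^sup>2))"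
    using N by (simp add: algebra_simps)
  finally show ?thesis using \<open>(\<Sum>i\<in>A. (l i)\<^sup>2) = _\<close> unfolding A_def p_def l_def by simp
qed

lemma loss_zero:
  fixes x w :: "'a::euclidean_space" and \<theta> :: "nat \<Rightarrow> real"
  assumes lab: "1 \<le> yl" "yl \<le> yr" "yr \<le> K"
    and N: "real K - 1 - real (yr - yl) < 1"
  shows "(\<Sum>i=1..K-1. (ord_loss K x yl yr w \<theta> i)\<^sup>2) = 0"
proof -
  have "yl = 1" "yr = K" using lab N by (auto simp: of_nat_diff)
  thus ?thesis by (intro sum.neutral) (auto simp: ord_loss_def)
qed

lemma final_aux:
  fixes X V S :: real
  assumes "0 \<le> X" "0 \<le> V" "0 \<le> S" "X\<^sup>2 - 2 * (X * S) \<le> V\<^sup>2"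
  shows "X \<le> V + 2 * S"
proof (rule ccontr)
  assume "\<not> ?thesis"
  hence h: "V + 2 * S < X" by simp
  have "V * V \<le> X * V" using h assms by (intro mult_right_mono) auto
  also have "X * V < X * (X - 2 * S)" using h assms by (intro mult_strict_left_mono) auto
  also have "\<dots> = X\<^sup>2 - 2 * (X * S)" by (simp add: power2_eq_square algebra_simps)
  finally show False using assms by (simp add: power2_eq_square)
qed

theorem theorem4:
  fixes x :: "nat \<Rightarrow> 'a::euclidean_space"
    and yl yr :: "nat \<Rightarrow> nat"
    and K T :: nat
    and w :: "nat \<Rightarrow> 'a" and \<theta> :: "nat \<Rightarrow> nat \<Rightarrow> real"
    and u :: 'a and b :: "nat \<Rightarrow> real"
  assumes labels: "\<forall>t\<in>{1..T}. 1 \<le> yl t \<and> yl t \<le> yr t \<and> yr t \<le> K"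
    and init_w: "w 1 = 0"
    and init_theta: "\<theta> 1 = (\<lambda>i. 0)"
    and run: "\<forall>t\<in>{1..T}. is_PA_update K (x t) (yl t) (yr t) (w t) (\<theta> t) (w (Suc t)) (\<theta> (Suc t))"
  shows "(\<Sum>t=1..T. \<Sum>i=1..K-1. (ord_loss K (x t) (yl t) (yr t) (w t) (\<theta> t) i)\<^sup>2)
    \<le> (1 + Max ((\<lambda>t. (norm (x t))\<^sup>2) ` {1..T})
              * (real K - real (Min ((\<lambda>t. yr t - yl t) ` {1..T})) - 1))\<^sup>2
      * (sqrt ((norm u)\<^sup>2 + (\<Sum>i=1..K-1. (b i)\<^sup>2))
         + 4 * (real K - real (Min ((\<lambda>t. yr t - yl t) ` {1..T})) - 1)
             * sqrt (\<Sum>t=1..T. \<Sum>i=1..K-1. (ord_loss K (x t) (yl t) (yr t) u b i)\<^sup>2))\<^sup>2"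
proof (cases "T = 0")
  case True
  thus ?thesis by simp
next
  case False
  define I where "I = {1..T}"
  define c where "c = Min ((\<lambda>t. yr t - yl t) ` {1..T})"
  define R2 where "R2 = Max ((\<lambda>t. (norm (x t))\<^sup>2) ` {1..T})"
  define N where "N = real K - real c - 1"
  define d where "d t = sqrt ((norm (w (Suc t) - w t))\<^sup>2 + (\<Sum>i=1..K-1. (\<theta> (Suc t) i - \<theta> t i)\<^sup>2))" for t
  define s where "s t = sqrt (\<Sum>i=1..K-1. (ord_loss K (x t) (yl t) (yr t) u b i)\<^sup>2)" for t
  define L where "L t = (\<Sum>i=1..K-1. (ord_loss K (x t) (yl t) (yr t) (w t) (\<theta> t) i)\<^sup>2)" for t
  define Phi where "Phi t = (norm (w t - u))\<^sup>2 + (\<Sum>i=1..K-1. (\<theta> t i - b i)\<^sup>2)" for t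
  define V where "V = sqrt ((norm u)\<^sup>2 + (\<Sum>i=1..K-1. (b i)\<^sup>2))"
  define X where "X = sqrt (\<Sum>t\<in>I. (d t)\<^sup>2)"
  define S where "S = sqrt (\<Sum>t\<in>I. (s t)\<^sup>2)"
  have T1: "1 \<in> I" using False unfolding I_def by auto
  have cle: "c \<le> yr t - yl t" if "t \<in> I" for t
    unfolding c_def using that I_def by (intro Min_le) auto
  have Rle: "(norm (x t))\<^sup>2 \<le> R2" if "t \<in> I" for t
    unfolding R2_def using that I_def by (intro Max_ge) auto
  have R2: "0 \<le> R2" using Rle[OF T1] by (meson order_trans zero_le_power2)
  have lab: "1 \<le> yl t" "yl t \<le> yr t" "yr t \<le> K" if "t \<in> I" for t
    using labels that unfolding I_def by auto
  have Nt: "real K - 1 - real (yr t - yl t) \<le> N" if "t \<in> I" for t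
    using cle[OF that] unfolding N_def by simp
  have N0: "0 \<le> N"
  proof -
    have "c \<le> K - 1" using cle[OF T1] lab[OF T1] by linarith
    thus ?thesis using lab[OF T1] unfolding N_def by linarith
  qed
  have step: "(d t)\<^sup>2 - 2 * d t * s t \<le> Phi t - Phi (Suc t)" if "t \<in> I" for t
    unfolding d_def s_def Phi_def
    using step_bound[OF run[rule_format, OF that[unfolded I_def]] lab[OF that]] .
  have "(\<Sum>t\<in>I. (d t)\<^sup>2 - 2 * d t * s t) \<le> (\<Sum>t\<in>I. Phi t - Phi (Suc t))"
    by (rule sum_mono) (rule step)
  also have "\<dots> = - (\<Sum>t=1..T. Phi (Suc t) - Phi t)" unfolding I_def
    by (simp add: sum_negf[symmetric])
  also have "\<dots> = Phi 1 - Phi (Suc T)" by (subst sum_Suc_diff) auto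
  also have "\<dots> \<le> Phi 1"
  proof -
    have "0 \<le> Phi (Suc T)" unfolding Phi_def by (intro add_nonneg_nonneg sum_nonneg) auto
    thus ?thesis by simp
  qed
  also have "\<dots> = V\<^sup>2" unfolding Phi_def V_def using init_w init_theta
    by (simp add: sum_nonneg power2_eq_square)
  finally have sumineq: "(\<Sum>t\<in>I. (d t)\<^sup>2) - 2 * (\<Sum>t\<in>I. d t * s t) \<le> V\<^sup>2"
    by (simp add: sum_subtractf sum_distrib_left mult.assoc)
  have V0: "0 \<le> V" "0 \<le> S" "0 \<le> X" unfolding V_def S_def X_def by (auto intro!: sum_nonneg add_nonneg_nonneg)
  have "(\<Sum>t\<in>I. d t * s t) \<le> X * S" unfolding X_def S_def by (rule cs_sum)
  hence "X\<^sup>2 - 2 * (X * S) \<le> V\<^sup>2" using sumineq unfolding X_def by (simp add: sum_nonneg)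
  hence XVS: "X \<le> V + 2 * S" by (rule final_aux[OF V0(3) V0(1) V0(2)])
  have Seq: "S = sqrt (\<Sum>t=1..T. \<Sum>i=1..K-1. (ord_loss K (x t) (yl t) (yr t) u b i)\<^sup>2)"
    unfolding S_def s_def I_def by (simp add: sum_nonneg)
  have lhs: "(\<Sum>t=1..T. \<Sum>i=1..K-1. (ord_loss K (x t) (yl t) (yr t) (w t) (\<theta> t) i)\<^sup>2) = (\<Sum>t\<in>I. L t)"
    unfolding L_def I_def ..
  show ?thesis
  proof (cases "N < 1")
    case True
    have "(\<Sum>t\<in>I. L t) = 0"
    proof (intro sum.neutral ballI)
      fix t assume t: "t \<in> I"
      show "L t = 0" unfolding L_def
        using Nt[OF t] True by (intro loss_zero[OF lab[OF t]]) linarith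
    qed
    thus ?thesis unfolding lhs by simp
  next
    case False
    hence N1: "1 \<le> N" by simp
    have D1: "1 \<le> 1 + R2 * N" using R2 N0 by simp
    have "(\<Sum>t\<in>I. L t) \<le> (\<Sum>t\<in>I. (1 + R2 * N) * (d t)\<^sup>2)"
    proof (rule sum_mono)
      fix t assume t: "t \<in> I"
      have "L t \<le> (1 + R2 * N) * ((norm (w (Suc t) - w t))\<^sup>2 + (\<Sum>i=1..K-1. (\<theta> (Suc t) i - \<theta> t i)\<^sup>2))"
        unfolding L_def
        by (rule loss_bound[OF run[rule_format, OF t[unfolded I_def]] lab[OF t] Nt[OF t] N1 Rle[OF t]])
      thus "L t \<le> (1 + R2 * N) * (d t)\<^sup>2" unfolding d_def by (simp add: sum_nonneg)
    qed
    also have "\<dots> = (1 + R2 * N) * X\<^sup>2" unfolding X_def by (simp add: sum_distrib_left sum_nonneg)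
    also have "\<dots> \<le> (1 + R2 * N) * (V + 2 * S)\<^sup>2"
      using XVS V0 D1 by (intro mult_left_mono power_mono) auto
    also have "\<dots> \<le> (1 + R2 * N)\<^sup>2 * (V + 4 * N * S)\<^sup>2"
    proof (intro mult_mono power_mono)
      show "1 + R2 * N \<le> (1 + R2 * N)\<^sup>2" using D1 by (simp add: power2_eq_square)
      have "2 * S \<le> 4 * N * S" using N1 V0 by (simp add: mult_right_mono)
      thus "V + 2 * S \<le> V + 4 * N * S" by simp
    qed (use V0 N0 D1 in auto)
    finally show ?thesis unfolding lhs Seq V_def N_def R2_def c_def .
  qed
qed

end
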